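(* Assume the setting and notation described in the context, with $1\le p<s\le d$, $\omega>0$, and with the following nondegeneracy conditions: - $\mathbf A_R(\omega)$ is invertible; - $\mathbf A_V(\omega)$ is invertible if $s<d$; - $a_{s,s}(\omega)\ne0$; - $\mathbf a_R^{\mathrm T}(\omega)\mathbf A_R^{-1}(\omega)\mathbf D_a\neq0$. Let $\vec f_d,\vec f_a\in\mathbb C$ and $\vec{\mathbf x}\in\mathbb C^d$ satisfy $\mathbf A(\omega)\vec{\mathbf x}=\mathbf B_d\vec f_d+\mathbf B_a\vec f_a$ and $\vec x_s=0$, where $\vec f_a$ is an arbitrary absorber force phasor, produced by any absorber and any control law. Then, for every link $i=1,\dots,d+1$, the maximal elastic potential energy $W_{i,\max}=\tfrac12k_i|\vec x_i-\vec x_{i-1}|^2$ (with $\vec x_0=\vec x_{d+1}=0$) is a function only of: - the frequency $\omega$; - the disturbance amplitude $|\vec f_d|$; - the structural parameters $\{m_i: 1\le i\le d,\ i\ne s\}$ and $\{k_i,c_i: 1\le i\le d+1\}$. In particular, these maximal energies do not depend on the parameters (mass, stiffness, damping) of the absorber or on the control law generating $\vec f_a$. Hence they cannot be modified by the absorber design or its control, but only by changing the structural parameters of the chain.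
   Context: A chain of $d\ge 2$ masses $m_1,\dots,m_d>0$ is considered. For $1\le i\le d+1$, link $i$ connects mass $i-1$ and mass $i$ through a spring $k_i>0$ and a damper $c_i\ge0$, where "mass $0$" and "mass $d+1$" denote the fixed base. - $\mathbf M=\mathrm{diag}(m_1,\dots,m_d)$. - $\mathbf K$ is tridiagonal with $K_{ii}=k_i+k_{i+1}$ and $K_{i,i+1}=K_{i+1,i}=-k_{i+1}$; all other entries are zero. - $\mathbf C$ is defined likewise with the $c_i$. - $\mathbf A(\omega)=-\omega^2\mathbf M+\jmath\omega\mathbf C+\mathbf K$ for a fixed $\omega>0$. Steady-state phasors satisfy $\mathbf A(\omega)\vec{\mathbf x}=\mathbf B_d\vec f_d+\mathbf B_a\vec f_a$, where $\mathbf B_d=\mathbf e_d$ and $\mathbf B_a=\mathbf e_p$ are standard unit vectors of $\mathbb C^d$. Here $\vec f_d$ is the disturbance force phasor acting on $m_d$, and $\vec f_a$ is the total force in the link of an active absorber mounted on $m_p$. With $1\le p<s\le d$, the block decomposition of $\mathbf A(\omega)$ according to indices $\{1,\dots,s-1\}$, $\{s\}$, $\{s+1,\dots,d\}$ is $$\mathbf A=\begin{bmatrix}\mathbf A_R&\mathbf a_R&\mathbf 0\\ \mathbf a_R^{\mathrm T}&a_{s,s}&\mathbf a_V^{\mathrm T}\\ \mathbf 0&\mathbf a_V&\mathbf A_V\end{bmatrix},$$ where: - $\mathbf a_R=(0,\dots,0,-k_s-\jmath\omega c_s)^{\mathrm T}\in\mathbb C^{s-1}$; - $\mathbf a_V=(-k_{s+1}-\jmath\omega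 c_{s+1},0,\dots,0)^{\mathrm T}\in\mathbb C^{d-s}$; - $a_{s,s}=-\omega^2m_s+k_s+k_{s+1}+\jmath\omega(c_s+c_{s+1})$. $\mathbf D_a\in\mathbb R^{s-1}$ is the $p$-th standard unit vector, and $\mathbf D_d\in\mathbb R^{d-s}$ is the last standard unit vector. $W_{i,\max}=\tfrac12k_i|\vec x_i-\vec x_{i-1}|^2$ is the maximum over $t$ of the elastic energy $\tfrac12k_i(x_i(t)-x_{i-1}(t))^2$ in link $i$, where $x_i(t)=\Re(\vec x_ie^{\jmath\omega t})$. *)

theory Defs
  imports Complex_Main "Jordan_Normal_Form.Gauss_Jordan_Elimination"
begin

text \<open>Chain of masses; all indices below are 1-based as in the paper
  (mass 0 and mass d+1 denote the fixed base). Matrices/vectors of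
  Jordan_Normal_Form are 0-based, so paper entry (i,j) is JNF entry (i-1,j-1).\<close>

definition link_imp :: "(nat \<Rightarrow> real) \<Rightarrow> (nat \<Rightarrow> real) \<Rightarrow> real \<Rightarrow> nat \<Rightarrow> complex" where
  "link_imp k c \<omega> i = complex_of_real (k i) + \<i> * complex_of_real (\<omega> * c i)"

text \<open>Entry (i,j) (1-based) of A(omega) = -omega^2 M + j omega C + K.\<close>
definition A_entry :: "(nat \<Rightarrow> real) \<Rightarrow> (nat \<Rightarrow> real) \<Rightarrow> (nat \<Rightarrow> real) \<Rightarrow> real \<Rightarrow> nat \<Rightarrow> nat \<Rightarrow> complex" where
  "A_entry m k c \<omega> i j =
     (if i = j then - complex_of_real (\<omega>^2 * m i) + link_imp k c \<omega> i + link_imp k c \<omega> (i+1)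
      else if j = i + 1 then - link_imp k c \<omega> (i+1)
      else if i = j + 1 then - link_imp k c \<omega> i
      else 0)"

definition A_mat :: "nat \<Rightarrow> (nat \<Rightarrow> real) \<Rightarrow> (nat \<Rightarrow> real) \<Rightarrow> (nat \<Rightarrow> real) \<Rightarrow> real \<Rightarrow> complex mat" where
  "A_mat d m k c \<omega> = mat d d (\<lambda>(i,j). A_entry m k c \<omega> (i+1) (j+1))"

definition A_R :: "nat \<Rightarrow> (nat \<Rightarrow> real) \<Rightarrow> (nat \<Rightarrow> real) \<Rightarrow> (nat \<Rightarrow> real) \<Rightarrow> real \<Rightarrow> complex mat" where
  "A_R s m k c \<omega> = mat (s-1) (s-1) (\<lambda>(i,j). A_entry m k c \<omega> (i+1) (j+1))"

definition A_V :: "nat \<Rightarrow> nat \<Rightarrow> (nat \<Rightarrow> real) \<Rightarrow> (nat \<Rightarrow> real) \<Rightarrow> (nat \<Rightarrow> real) \<Rightarrow> real \<Rightarrow> complex mat" where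
  "A_V d s m k c \<omega> = mat (d-s) (d-s) (\<lambda>(i,j). A_entry m k c \<omega> (s+1+i) (s+1+j))"

definition a_R :: "nat \<Rightarrow> (nat \<Rightarrow> real) \<Rightarrow> (nat \<Rightarrow> real) \<Rightarrow> real \<Rightarrow> complex vec" where
  "a_R s k c \<omega> = vec (s-1) (\<lambda>i. if i + 2 = s then - link_imp k c \<omega> s else 0)"

definition a_ss :: "nat \<Rightarrow> (nat \<Rightarrow> real) \<Rightarrow> (nat \<Rightarrow> real) \<Rightarrow> (nat \<Rightarrow> real) \<Rightarrow> real \<Rightarrow> complex" where
  "a_ss s m k c \<omega> = A_entry m k c \<omega> s s"

definition D_a :: "nat \<Rightarrow> nat \<Rightarrow> complex vec" where
  "D_a s p = unit_vec (s-1) (p-1)"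

definition chain_params :: "nat \<Rightarrow> (nat \<Rightarrow> real) \<Rightarrow> (nat \<Rightarrow> real) \<Rightarrow> (nat \<Rightarrow> real) \<Rightarrow> bool" where
  "chain_params d m k c \<longleftrightarrow>
     (\<forall>i\<in>{1..d}. m i > 0) \<and> (\<forall>i\<in>{1..d+1}. k i > 0) \<and> (\<forall>i\<in>{1..d+1}. c i \<ge> 0)"

definition nondegenerate :: "nat \<Rightarrow> nat \<Rightarrow> nat \<Rightarrow> real \<Rightarrow> (nat \<Rightarrow> real) \<Rightarrow> (nat \<Rightarrow> real) \<Rightarrow> (nat \<Rightarrow> real) \<Rightarrow> bool" where
  "nondegenerate d p s \<omega> m k c \<longleftrightarrow>
     invertible_mat (A_R s m k c \<omega>) \<and>
     (s < d \<longrightarrow> invertible_mat (A_V d s m k c \<omega>)) \<and>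
     a_ss s m k c \<omega> \<noteq> 0 \<and>
     a_R s k c \<omega> \<bullet> (the (mat_inverse (A_R s m k c \<omega>)) *\<^sub>v D_a s p) \<noteq> 0"

text \<open>Steady state: A x = B_d f_d + B_a f_a with B_d = e_d, B_a = e_p.\<close>
definition steady_state :: "nat \<Rightarrow> nat \<Rightarrow> real \<Rightarrow> (nat \<Rightarrow> real) \<Rightarrow> (nat \<Rightarrow> real) \<Rightarrow> (nat \<Rightarrow> real)
    \<Rightarrow> complex \<Rightarrow> complex \<Rightarrow> complex vec \<Rightarrow> bool" where
  "steady_state d p \<omega> m k c fd fa x \<longleftrightarrow>
     x \<in> carrier_vec d \<and>
     A_mat d m k c \<omega> *\<^sub>v x = fd \<cdot>\<^sub>v unit_vec d (d-1) + fa \<cdot>\<^sub>v unit_vec d (p-1)"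

definition phasor :: "complex vec \<Rightarrow> nat \<Rightarrow> complex" where
  "phasor x i = (if 1 \<le> i \<and> i \<le> dim_vec x then x $ (i-1) else 0)"

definition W_max :: "(nat \<Rightarrow> real) \<Rightarrow> complex vec \<Rightarrow> nat \<Rightarrow> real" where
  "W_max k x i = 1/2 * k i * (cmod (phasor x i - phasor x (i-1)))^2"

end

theory Submission
  imports Defs
begin

lemma inv_some:
  fixes A :: "complex mat"
  assumes "invertible_mat A" "A \<in> carrier_mat n n"
  shows "\<exists>B. mat_inverse A = Some B \<and> A * B = 1\<^sub>m n \<and> B * A = 1\<^sub>m n \<and> B \<in> carrier_mat n n"
proof -
  obtain B where AB: "A * B = 1\<^sub>m n" and BA: "B * A = 1\<^sub>m (dim_row B)"
    using assms unfolding invertible_mat_def inverts_mat_def by auto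
  have "dim_col B = n" using arg_cong[OF AB, of dim_col] by simp
  moreover have "dim_row B = n" using arg_cong[OF BA, of dim_col] assms(2) by simp
  ultimately have B: "B \<in> carrier_mat n n" by auto
  have "A \<in> Units (ring_mat TYPE(complex) n ())"
    unfolding Units_def ring_mat_def using assms(2) B AB BA by auto
  then obtain C where "mat_inverse A = Some C"
    using mat_inverse(1)[OF assms(2), of "()"] by (cases "mat_inverse A") auto
  then show ?thesis using mat_inverse(2)[OF assms(2)] by blast
qed

lemma inv_zero:
  fixes A :: "complex mat"
  assumes "invertible_mat A" "A \<in> carrier_mat n n" "v \<in> carrier_vec n" "A *\<^sub>v v = 0\<^sub>v n"
  shows "v = 0\<^sub>v n"
proof -
  obtain B where "B * A = 1\<^sub>m n" "B \<in> carrier_mat n n" using inv_some[OF assms(1,2)] by blast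
  then have "v = (B * A) *\<^sub>v v" using assms by simp
  also have "\<dots> = B *\<^sub>v (A *\<^sub>v v)" using assms \<open>B \<in> _\<close> by simp
  also have "\<dots> = 0\<^sub>v n" using assms \<open>B \<in> _\<close> by (auto intro!: eq_vecI simp: scalar_prod_def)
  finally show ?thesis .
qed

lemma tri:
  fixes F :: "nat \<Rightarrow> nat \<Rightarrow> complex"
  assumes band: "\<And>i j. j + 1 < i \<or> i + 1 < j \<Longrightarrow> F i j = 0"
    and v: "v \<in> carrier_vec n" and i: "i < n"
  shows "(mat n n (\<lambda>(i,j). F i j) *\<^sub>v v) $ i =
     F i i * v $ i + (if 0 < i then F i (i-1) * v $ (i-1) else 0)
       + (if i + 1 < n then F i (i+1) * v $ (i+1) else 0)"
proof -
  have "(mat n n (\<lambda>(i,j). F i j) *\<^sub>v v) $ i = (\<Sum>j\<in>{0..<n}. F i j * v $ j)"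
    using v i by (simp add: scalar_prod_def)
  also have "\<dots> = (\<Sum>j\<in>{0..<n}. (if j = i then F i i * v $ i else 0)
      + (if j = i - 1 \<and> 0 < i then F i (i-1) * v $ (i-1) else 0)
      + (if j = i + 1 then F i (i+1) * v $ (i+1) else 0))"
  proof (rule sum.cong[OF refl])
    fix j assume "j \<in> {0..<n}"
      have z: "j \<noteq> i \<Longrightarrow> j \<noteq> i+1 \<Longrightarrow> \<not>(j = i-1 \<and> 0<i) \<Longrightarrow> F i j = 0"
        using band[of j i] by (metis Suc_eq_plus1 add_diff_cancel_right' bot_nat_0.not_eq_extremum less_Suc_eq linorder_neqE_nat)
    show "F i j * v $ j = (if j = i then F i i * v $ i else 0)
      + (if j = i - 1 \<and> 0 < i then F i (i-1) * v $ (i-1) else 0)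
      + (if j = i + 1 then F i (i+1) * v $ (i+1) else 0)"
      using z by (cases "j = i"; cases "j = i - 1 \<and> 0 < i"; cases "j = i+1") auto
  qed
  also have "\<dots> = F i i * v $ i + (if 0 < i then F i (i-1) * v $ (i-1) else 0)
       + (if i + 1 < n then F i (i+1) * v $ (i+1) else 0)"
    using i by (simp add: sum.distrib sum.delta' conj_commute)
  finally show ?thesis .
qed

lemma band_A: "b + 1 < a \<or> a + 1 < b \<Longrightarrow> A_entry m k c \<omega> a b = 0"
  unfolding A_entry_def by auto

lemma Arow:
  assumes "x \<in> carrier_vec d" "i < d"
  shows "(A_mat d m k c \<omega> *\<^sub>v x) $ i = A_entry m k c \<omega> (i+1) (i+1) * x $ i
     + (if 0 < i then A_entry m k c \<omega> (i+1) i * x $ (i-1) else 0)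
     + (if i + 1 < d then A_entry m k c \<omega> (i+1) (i+2) * x $ (i+1) else 0)"
proof -
  have "(A_mat d m k c \<omega> *\<^sub>v x) $ i = (mat d d (\<lambda>(i,j). (\<lambda>i j. A_entry m k c \<omega> (i+1) (j+1)) i j) *\<^sub>v x) $ i"
    unfolding A_mat_def by simp
  also note tri[OF band_A assms]
  finally show ?thesis by (cases i) auto
qed

lemma AVrow:
  assumes "v \<in> carrier_vec (d-s)" "i < d-s"
  shows "(A_V d s m k c \<omega> *\<^sub>v v) $ i = A_entry m k c \<omega> (s+1+i) (s+1+i) * v $ i
     + (if 0 < i then A_entry m k c \<omega> (s+1+i) (s+i) * v $ (i-1) else 0)
     + (if i + 1 < d-s then A_entry m k c \<omega> (s+1+i) (s+2+i) * v $ (i+1) else 0)"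
proof -
  have "(A_V d s m k c \<omega> *\<^sub>v v) $ i = (mat (d-s) (d-s) (\<lambda>(i,j). (\<lambda>i j. A_entry m k c \<omega> (s+1+i) (s+1+j)) i j) *\<^sub>v v) $ i"
    unfolding A_V_def by simp
  also note tri[OF band_A assms]
  finally show ?thesis by (cases i) auto
qed

lemma ARrow:
  assumes "v \<in> carrier_vec (s-1)" "i < s-1"
  shows "(A_R s m k c \<omega> *\<^sub>v v) $ i = A_entry m k c \<omega> (i+1) (i+1) * v $ i
     + (if 0 < i then A_entry m k c \<omega> (i+1) i * v $ (i-1) else 0)
     + (if i + 1 < s-1 then A_entry m k c \<omega> (i+1) (i+2) * v $ (i+1) else 0)"
proof -
  have "(A_R s m k c \<omega> *\<^sub>v v) $ i = (mat (s-1) (s-1) (\<lambda>(i,j). (\<lambda>i j. A_entry m k c \<omega> (i+1) (j+1)) i j) *\<^sub>v v) $ i"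
    unfolding A_R_def by simp
  also note tri[OF band_A assms]
  finally show ?thesis by (cases i) auto
qed

lemma link_nz: "k s > 0 \<Longrightarrow> link_imp k c \<omega> s \<noteq> 0"
  unfolding link_imp_def by (auto simp: complex_eq_iff)

lemma U:
  fixes x :: "complex vec"
  assumes p: "1 \<le> p" "p < s" "s \<le> d"
    and cp: "chain_params d m k c" and nd: "nondegenerate d p s \<omega> m k c"
    and x: "x \<in> carrier_vec d" and xs: "x $ (s-1) = 0"
    and eq: "\<forall>i<d. (A_mat d m k c \<omega> *\<^sub>v x) $ i = (if i = p - 1 then g else 0)"
  shows "x = 0\<^sub>v d"
proof -
  have Ls: "link_imp k c \<omega> s \<noteq> 0" using cp p by (intro link_nz) (auto simp: chain_params_def)
  have step1: "x $ j = 0" if j: "s \<le> j" "j < d" for j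
  proof -
    define xV where "xV = vec (d-s) (\<lambda>i. x $ (s+i))"
    have xV: "xV \<in> carrier_vec (d-s)" unfolding xV_def by simp
    have "A_V d s m k c \<omega> *\<^sub>v xV = 0\<^sub>v (d-s)"
    proof (rule eq_vecI)
      fix i assume i: "i < dim_vec (0\<^sub>v (d-s) :: complex vec)"
      then have i: "i < d - s" by simp
      have "(A_V d s m k c \<omega> *\<^sub>v xV) $ i = (A_mat d m k c \<omega> *\<^sub>v x) $ (s+i)"
        using AVrow[where m=m and k=k and c=c and \<omega>=\<omega>, OF xV i] Arow[where i="s+i" and m=m and k=k and c=c and \<omega>=\<omega>, OF x] i xs unfolding xV_def
        by (cases i) (auto simp: algebra_simps simp del: index_mult_mat_vec)
      also have "\<dots> = 0" using eq i p by auto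
      finally show "(A_V d s m k c \<omega> *\<^sub>v xV) $ i = 0\<^sub>v (d - s) $ i" using i by simp
    qed (simp add: A_V_def)
    then have "xV = 0\<^sub>v (d-s)"
      using inv_zero[of "A_V d s m k c \<omega>" "d-s" xV] nd j xV
      unfolding nondegenerate_def by (auto simp: A_V_def)
    then have "xV $ (j - s) = 0" using j by simp
    then show ?thesis unfolding xV_def using j by (metis le_add_diff_inverse index_vec diff_less_mono)
  qed
  have s2: "2 \<le> s" using p by simp
  have "(A_mat d m k c \<omega> *\<^sub>v x) $ (s-1) = 0" using eq p by auto
  moreover have "(A_mat d m k c \<omega> *\<^sub>v x) $ (s-1) = A_entry m k c \<omega> s (s-1) * x $ (s-2)"
    using Arow[where i="s-1" and m=m and k=k and c=c and \<omega>=\<omega>, OF x] p xs step1[of s] s2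
    by (auto simp: numeral_2_eq_2 Suc_diff_Suc)
  moreover have "A_entry m k c \<omega> s (s-1) = - link_imp k c \<omega> s"
    unfolding A_entry_def using s2 by auto
  ultimately have xs2: "x $ (s-2) = 0" using Ls by simp
  define xR where "xR = vec (s-1) (\<lambda>i. x $ i)"
  have xR: "xR \<in> carrier_vec (s-1)" unfolding xR_def by simp
  have AR: "A_R s m k c \<omega> \<in> carrier_mat (s-1) (s-1)" unfolding A_R_def by simp
  have ARx: "A_R s m k c \<omega> *\<^sub>v xR = g \<cdot>\<^sub>v D_a s p"
  proof (rule eq_vecI)
    fix i assume "i < dim_vec (g \<cdot>\<^sub>v D_a s p)"
    then have i: "i < s - 1" by (simp add: D_a_def)
    have xi1: "\<not> i + 1 < s - 1 \<Longrightarrow> x $ (i+1) = 0" using i xs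
      by (metis Suc_eq_plus1 Suc_lessI)
    have "(A_R s m k c \<omega> *\<^sub>v xR) $ i = (A_mat d m k c \<omega> *\<^sub>v x) $ i"
      using xi1 ARrow[where m=m and k=k and c=c and \<omega>=\<omega>, OF xR i] Arow[where i=i and m=m and k=k and c=c and \<omega>=\<omega>, OF x] i xs p unfolding xR_def
      by (cases i) (auto simp: algebra_simps simp del: index_mult_mat_vec)
    also have "\<dots> = (g \<cdot>\<^sub>v D_a s p) $ i" using eq i p by (auto simp: D_a_def)
    finally show "(A_R s m k c \<omega> *\<^sub>v xR) $ i = (g \<cdot>\<^sub>v D_a s p) $ i" .
  qed (simp add: A_R_def D_a_def)
  obtain B where B: "mat_inverse (A_R s m k c \<omega>) = Some B" "B * A_R s m k c \<omega> = 1\<^sub>m (s-1)"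
    "B \<in> carrier_mat (s-1) (s-1)"
    using inv_some[OF _ AR] nd unfolding nondegenerate_def by blast
  have D: "D_a s p \<in> carrier_vec (s-1)" by (simp add: D_a_def)
  have "xR = (B * A_R s m k c \<omega>) *\<^sub>v xR" using B xR by simp
  also have "\<dots> = B *\<^sub>v (g \<cdot>\<^sub>v D_a s p)" by (simp only: assoc_mult_mat_vec[OF B(3) AR xR] ARx)
  also have "\<dots> = g \<cdot>\<^sub>v (B *\<^sub>v D_a s p)" using mult_mat_vec[OF B(3) D] by simp
  finally have xRe: "xR = g \<cdot>\<^sub>v (B *\<^sub>v D_a s p)" .
  have aR: "a_R s k c \<omega> = (- link_imp k c \<omega> s) \<cdot>\<^sub>v unit_vec (s-1) (s-2)"
    unfolding a_R_def by (rule eq_vecI) (auto simp: s2)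
  have "a_R s k c \<omega> \<bullet> xR = - link_imp k c \<omega> s * x $ (s-2)"
    unfolding aR using xR s2 by (simp add: xR_def)
  also have "\<dots> = 0" using xs2 by simp
  finally have "a_R s k c \<omega> \<bullet> (g \<cdot>\<^sub>v (B *\<^sub>v D_a s p)) = 0" using xRe by simp
  then have "g * (a_R s k c \<omega> \<bullet> (B *\<^sub>v D_a s p)) = 0"
    using B(3) D by (simp add: a_R_def)
  then have g0: "g = 0" using nd B(1) unfolding nondegenerate_def by auto
  have xR0: "x $ i = 0" if "i < s - 1" for i
  proof -
    have "xR $ i = 0" using xRe g0 that B(3) by simp
    then show ?thesis using that unfolding xR_def by simp
  qed
  show ?thesis
  proof (rule eq_vecI)
    fix i assume "i < dim_vec (0\<^sub>v d :: complex vec)"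
    then have i: "i < d" by simp
    show "x $ i = 0\<^sub>v d $ i"
      using i xR0[of i] xs step1[of i] by (cases "i < s - 1"; cases "i = s - 1") auto
  qed (use x in simp)
qed


lemma Aeq:
  fixes x :: "complex vec"
  assumes x: "x \<in> carrier_vec d" and xs: "x $ (s-1) = 0" and s: "1 \<le> s"
    and mm: "\<forall>i\<in>{1..d}. i \<noteq> s \<longrightarrow> m i = m' i"
    and kk: "\<forall>i\<in>{1..d+1}. k i = k' i \<and> c i = c' i"
  shows "A_mat d m k c \<omega> *\<^sub>v x = A_mat d m' k' c' \<omega> *\<^sub>v x"
proof (rule eq_vecI)
  fix i assume "i < dim_vec (A_mat d m' k' c' \<omega> *\<^sub>v x)"
  then have i: "i < d" by (simp add: A_mat_def)
  have "(\<Sum>j\<in>{0..<d}. A_entry m k c \<omega> (i+1) (j+1) * x $ j) =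
        (\<Sum>j\<in>{0..<d}. A_entry m' k' c' \<omega> (i+1) (j+1) * x $ j)"
  proof (rule sum.cong[OF refl])
    fix j assume j: "j \<in> {0..<d}"
    show "A_entry m k c \<omega> (i+1) (j+1) * x $ j = A_entry m' k' c' \<omega> (i+1) (j+1) * x $ j"
    proof (cases "i = j \<and> j = s - 1")
      case True then show ?thesis using xs by simp
    next
      case False
      have k1: "k (i+1) = k' (i+1)" "c (i+1) = c' (i+1)" "k (i+2) = k' (i+2)" "c (i+2) = c' (i+2)"
        using kk i by auto
      have "i = j \<Longrightarrow> m (i+1) = m' (i+1)" using mm i False s by auto
      then show ?thesis using k1 unfolding A_entry_def link_imp_def
        by (auto simp: numeral_2_eq_2)
    qed
  qed
  then show "(A_mat d m k c \<omega> *\<^sub>v x) $ i = (A_mat d m' k' c' \<omega> *\<^sub>v x) $ i"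
    using i x by (simp add: A_mat_def scalar_prod_def)
qed (simp add: A_mat_def)

lemma ss_comp:
  assumes "steady_state d p \<omega> m k c fd fa x" "i < d" "p - 1 < d - 1"
  shows "(A_mat d m k c \<omega> *\<^sub>v x) $ i = (if i = d - 1 then fd else 0) + (if i = p - 1 then fa else 0)"
  using assms unfolding steady_state_def by auto

theorem theorem1:
  fixes d p s :: nat and \<omega> :: real
    and m k c m' k' c' :: "nat \<Rightarrow> real"
    and fd fa fd' fa' :: complex and x x' :: "complex vec"
  assumes "2 \<le> d" "1 \<le> p" "p < s" "s \<le> d" "\<omega> > 0"
    and "chain_params d m k c" "chain_params d m' k' c'"
    and "nondegenerate d p s \<omega> m k c" "nondegenerate d p s \<omega> m' k' c'"
    and "steady_state d p \<omega> m k c fd fa x" "x $ (s-1) = 0"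
    and "steady_state d p \<omega> m' k' c' fd' fa' x'" "x' $ (s-1) = 0"
    and "cmod fd = cmod fd'"
    and "\<forall>i\<in>{1..d}. i \<noteq> s \<longrightarrow> m i = m' i"
    and "\<forall>i\<in>{1..d+1}. k i = k' i \<and> c i = c' i"
  shows "\<forall>i\<in>{1..d+1}. W_max k x i = W_max k' x' i"
proof -
  note a = assms
  have x: "x \<in> carrier_vec d" and x': "x' \<in> carrier_vec d"
    using a(10,12) unfolding steady_state_def by auto
  have pd: "p - 1 < d - 1" using a by auto
  have Ax: "\<forall>i<d. (A_mat d m k c \<omega> *\<^sub>v x) $ i = (if i = d - 1 then fd else 0) + (if i = p - 1 then fa else 0)"
    using ss_comp[OF a(10) _ pd] by blast
  have Ax'0: "\<forall>i<d. (A_mat d m' k' c' \<omega> *\<^sub>v x') $ i = (if i = d - 1 then fd' else 0) + (if i = p - 1 then fa' else 0)"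
    using ss_comp[OF a(12) _ pd] by blast
  have AA: "A_mat d m k c \<omega> *\<^sub>v x' = A_mat d m' k' c' \<omega> *\<^sub>v x'"
    by (rule Aeq[OF x' a(13)]) (use a in auto)
  have Ax': "\<forall>i<d. (A_mat d m k c \<omega> *\<^sub>v x') $ i = (if i = d - 1 then fd' else 0) + (if i = p - 1 then fa' else 0)"
    using Ax'0 AA by simp
  have Am: "A_mat d m k c \<omega> \<in> carrier_mat d d" by (simp add: A_mat_def)
  have rel: "fd' * x $ i = fd * x' $ i" if i: "i < d" for i
  proof -
    define y where "y = fd' \<cdot>\<^sub>v x - fd \<cdot>\<^sub>v x'"
    have y: "y \<in> carrier_vec d" using x x' unfolding y_def by simp
    have Ay: "A_mat d m k c \<omega> *\<^sub>v y = fd' \<cdot>\<^sub>v (A_mat d m k c \<omega> *\<^sub>v x) - fd \<cdot>\<^sub>v (A_mat d m k c \<omega> *\<^sub>v x')"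
      unfolding y_def using Am x x'
      by (simp add: mult_minus_distrib_mat_vec mult_mat_vec)
    have "\<forall>j<d. (A_mat d m k c \<omega> *\<^sub>v y) $ j = (if j = p - 1 then fd' * fa - fd * fa' else 0)"
    proof (intro allI impI)
      fix j assume j: "j < d"
      show "(A_mat d m k c \<omega> *\<^sub>v y) $ j = (if j = p - 1 then fd' * fa - fd * fa' else 0)"
        unfolding Ay using j Am x x' Ax Ax' pd
        by (auto simp: algebra_simps simp del: index_mult_mat_vec)
    qed
    moreover have "y $ (s-1) = 0" unfolding y_def using a(4,11,13,2,3) x x' by simp
    ultimately have "y = 0\<^sub>v d"
      using U[where g = "fd' * fa - fd * fa'", OF a(2,3,4,6,8) y] by blast
    then have "y $ i = 0" using i by simp
    then show ?thesis unfolding y_def using i x x' by simp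
  qed
  show ?thesis
  proof (cases "fd = 0")
    case True
    then have fd': "fd' = 0" using a(14) by simp
    have "x = 0\<^sub>v d"
      by (rule U[where g=fa, OF a(2,3,4,6,8) x a(11)]) (use Ax True in simp)
    moreover have "x' = 0\<^sub>v d"
      by (rule U[where g="fa'", OF a(2,3,4,7,9) x' a(13)]) (use Ax'0 fd' in simp)
    ultimately show ?thesis using a(16) by (simp add: W_max_def)
  next
    case False
    define r where "r = fd' / fd"
    have r1: "cmod r = 1" using False a(14) unfolding r_def by (auto simp: norm_divide)
    have ph: "phasor x' j = r * phasor x j" for j
    proof (cases "1 \<le> j \<and> j \<le> d")
      case True
      then have "fd' * x $ (j-1) = fd * x' $ (j-1)" using rel[of "j-1"] by (cases j) auto
      then show ?thesis using True x x' False unfolding phasor_def r_def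
        by (simp add: field_simps)
    next
      case False
      then show ?thesis using x x' unfolding phasor_def by auto
    qed
    show ?thesis
    proof
      fix i assume i: "i \<in> {1..d+1}"
      have "cmod (phasor x' i - phasor x' (i-1)) = cmod (phasor x i - phasor x (i-1))"
        unfolding ph by (simp add: right_diff_distrib[symmetric] norm_mult r1)
      then show "W_max k x i = W_max k' x' i" using a(16) i unfolding W_max_def by simp
    qed
  qed
qed

end
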